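(* Let $M_{cc}$ be the one-state Turing machine defined below, and let $n,m\ge 0$ be integers. Then $M_{cc}$ halts on the input string $u^n0^mh$ if and only if $n\ge 2^m-1$.
   Context: A one-state Turing machine is a tuple $\langle \{q\}, \Sigma, \Gamma, q, H, \delta\rangle$ with the following components: a unique state $q$; an input alphabet $\Sigma$ not containing the blank symbol $\sqcup$; a tape alphabet $\Gamma\supseteq\Sigma\cup\{\sqcup\}$; a set of halting symbols $H\subseteq\Gamma$; and a transition function $\delta:\Gamma\setminus H\to\Gamma\times\{L,R\}$. The tape is infinite in both directions. On input $x$, the tape holds $x$ with blanks everywhere else, and the head starts on the leftmost symbol of $x$. At each step, if the scanned symbol is in $H$, the machine halts. Otherwise, with $\delta(a)=(b,D)$ for the scanned symbol $a$, it writes $b$ and moves one cell in direction $D$. The machine $M_{cc}$ is this kind of machine with $\Sigma=\{u,0,h\}$, $\Gamma=\{\sqcup,u,U,h,0,1,Z,C,B\}$, $H=\{h\}$, and transitions $\delta(u)=(U,R)$, $\delta(0)=(1,L)$, $\delta(U)=(C,R)$, $\delta(1)=(Z,R)$, $\delta(Z)=(0,L)$, $\delta(C)=(B,L)$, $\delta(B)=(C,R)$, $\delta(\sqcup)=(\sqcup,L)$. Here $u^n0^mh$ denotes $n$ copies of $u$, followed by $m$ copies of $0$, followed by a single $h$. *)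

theory Defs
  imports Main
begin

text \<open>Generic one-state Turing machines on a two-way infinite tape indexed by int.
  The transition function is partial: None exactly on halting symbols.\<close>

datatype dir = L | R

type_synonym 'g config = "(int \<Rightarrow> 'g) \<times> int"

definition init_config :: "'g \<Rightarrow> 'g list \<Rightarrow> 'g config" where
  "init_config blank x =
     ((\<lambda>i. if 0 \<le> i \<and> i < int (length x) then x ! nat i else blank), 0)"

definition tm_step :: "('g \<Rightarrow> ('g \<times> dir) option) \<Rightarrow> 'g config \<Rightarrow> 'g config" where
  "tm_step \<delta> c = (case c of (t, p) \<Rightarrow>
     (case \<delta> (t p) of
        None \<Rightarrow> (t, p)
      | Some (b, d) \<Rightarrow> (t(p := b), if d = L then p - 1 else p + 1)))"

definition tm_halts :: "'g set \<Rightarrow> ('g \<Rightarrow> ('g \<times> dir) option) \<Rightarrow> 'g \<Rightarrow> 'g list \<Rightarrow> bool" where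
  "tm_halts H \<delta> blank x =
     (\<exists>k. case (tm_step \<delta> ^^ k) (init_config blank x) of (t, p) \<Rightarrow> t p \<in> H)"

datatype sym = Blank | Su | SU | Sh | S0 | S1 | SZ | SC | SB

definition H_cc :: "sym set" where "H_cc = {Sh}"

fun delta_cc :: "sym \<Rightarrow> (sym \<times> dir) option" where
  "delta_cc Su = Some (SU, R)"
| "delta_cc S0 = Some (S1, L)"
| "delta_cc SU = Some (SC, R)"
| "delta_cc S1 = Some (SZ, R)"
| "delta_cc SZ = Some (S0, L)"
| "delta_cc SC = Some (SB, L)"
| "delta_cc SB = Some (SC, R)"
| "delta_cc Blank = Some (Blank, L)"
| "delta_cc Sh = None"

definition M_cc_halts :: "sym list \<Rightarrow> bool" where
  "M_cc_halts x = tm_halts H_cc delta_cc Blank x"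

definition input_word :: "nat \<Rightarrow> nat \<Rightarrow> sym list" where
  "input_word n m = replicate n Su @ replicate m S0 @ [Sh]"

end

theory Submission
  imports Defs
begin

abbreviation stp where "stp \<equiv> tm_step delta_cc"

definition hlt :: "sym config \<Rightarrow> bool" where
  "hlt c = (\<exists>k. case (stp ^^ k) c of (t, p) \<Rightarrow> t p = Sh)"

definition reach :: "sym config \<Rightarrow> sym config \<Rightarrow> bool" where
  "reach c c' = (\<exists>k. (stp ^^ k) c = c')"

lemma reach_trans: "reach a b \<Longrightarrow> reach b c \<Longrightarrow> reach a c"
  unfolding reach_def by (metis funpow_add comp_apply)

lemma reach_step: "reach (stp c) c' \<Longrightarrow> reach c c'"
  unfolding reach_def by (metis funpow_Suc_right comp_apply)

lemma reach_refl: "reach c c"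
  unfolding reach_def by (metis funpow_0)

lemma fix_h: "fst c (snd c) = Sh \<Longrightarrow> (stp ^^ i) c = c"
proof (induction i)
  case 0 then show ?case by (auto simp: fun_eq_iff)
next
  case (Suc i)
  have "stp c = c" using Suc.prems by (cases c) (simp add: tm_step_def)
  then show ?case using Suc by simp
qed

lemma reach_hlt: "reach c c' \<Longrightarrow> hlt c \<longleftrightarrow> hlt c'"
proof -
  assume "reach c c'"
  then obtain k where k: "(stp ^^ k) c = c'" unfolding reach_def by blast
  show ?thesis
  proof
    assume "hlt c"
    then obtain j where j: "case (stp ^^ j) c of (t, p) \<Rightarrow> t p = Sh" unfolding hlt_def by metis
    then have "(stp ^^ k) ((stp ^^ j) c) = (stp ^^ j) c"
      by (intro fix_h) (auto split: prod.splits)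
    then have "(stp ^^ j) c' = (stp ^^ j) c"
      using k by (metis comp_apply funpow_add add.commute)
    then show "hlt c'" using j unfolding hlt_def by metis
  next
    assume "hlt c'"
    then obtain j where j: "case (stp ^^ j) c' of (t, p) \<Rightarrow> t p = Sh" unfolding hlt_def by metis
    have "(stp ^^ (j + k)) c = (stp ^^ j) c'" using k by (simp add: funpow_add)
    then show "hlt c" using j unfolding hlt_def by metis
  qed
qed

lemma sweep_left:
  assumes "delta_cc x = Some (y, L)"
  shows "(\<forall>i. p - int k < i \<and> i \<le> p \<longrightarrow> t i = x) \<Longrightarrow>
    (stp ^^ k) (t, p) = ((\<lambda>i. if p - int k < i \<and> i \<le> p then y else t i), p - int k)"
proof (induction k arbitrary: p t)
  case 0 then show ?case by (auto simp: fun_eq_iff)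
next
  case (Suc k)
  have s: "stp (t, p) = (t(p := y), p - 1)" using Suc.prems assms by (simp add: tm_step_def)
  have "(stp ^^ k) (t(p := y), p - 1) =
     ((\<lambda>i. if p - 1 - int k < i \<and> i \<le> p - 1 then y else (t(p := y)) i), p - 1 - int k)"
    using Suc by (intro Suc.IH) auto
  moreover have "(\<lambda>i. if p - 1 - int k < i \<and> i \<le> p - 1 then y else (t(p := y)) i) =
     (\<lambda>i. if p - int (Suc k) < i \<and> i \<le> p then y else t i)" by (rule ext) auto
  ultimately show ?case using s by (simp add: funpow_Suc_right algebra_simps del: funpow.simps)
qed

lemma sweep_right:
  assumes "delta_cc x = Some (y, R)"
  shows "(\<forall>i. p \<le> i \<and> i < p + int k \<longrightarrow> t i = x) \<Longrightarrow>
    (stp ^^ k) (t, p) = ((\<lambda>i. if p \<le> i \<and> i < p + int k then y else t i), p + int k)"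
proof (induction k arbitrary: p t)
  case 0 then show ?case by (auto simp: fun_eq_iff)
next
  case (Suc k)
  have s: "stp (t, p) = (t(p := y), p + 1)" using Suc.prems assms by (simp add: tm_step_def)
  have "(stp ^^ k) (t(p := y), p + 1) =
     ((\<lambda>i. if p + 1 \<le> i \<and> i < p + 1 + int k then y else (t(p := y)) i), p + 1 + int k)"
    using Suc by (intro Suc.IH) auto
  moreover have "(\<lambda>i. if p + 1 \<le> i \<and> i < p + 1 + int k then y else (t(p := y)) i) =
     (\<lambda>i. if p \<le> i \<and> i < p + int (Suc k) then y else t i)" by (rule ext) auto
  ultimately show ?case using s by (simp add: funpow_Suc_right algebra_simps del: funpow.simps)
qed

lemma blank_run:
  assumes "\<forall>i\<le>p. t i = Blank"
  shows "(stp ^^ k) (t, p) = (t, p - int k)"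
  using assms
proof (induction k arbitrary: p)
  case 0 then show ?case by (auto simp: fun_eq_iff)
next
  case (Suc k)
  have "stp (t, p) = (t, p - 1)" using Suc.prems by (simp add: tm_step_def fun_upd_idem)
  moreover have "(stp ^^ k) (t, p - 1) = (t, p - 1 - int k)" using Suc by (intro Suc.IH) auto
  ultimately show ?case by (simp add: funpow_Suc_right algebra_simps del: funpow.simps)
qed

lemma blank_nohlt:
  assumes "\<forall>i\<le>p. t i = Blank"
  shows "\<not> hlt (t, p)"
  unfolding hlt_def using blank_run[OF assms] assms by auto

definition cnt :: "nat \<Rightarrow> nat \<Rightarrow> nat \<Rightarrow> sym \<Rightarrow> (int \<Rightarrow> sym) \<Rightarrow> int \<Rightarrow> sym" where
  "cnt n a j s r = (\<lambda>i. if i < 0 then Blank else if i < int a then SU else if i < int n then SC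
      else if i < int n + int j then s else r i)"

lemma fuel:
  assumes "a \<le> n" "1 \<le> a"
  shows "reach (cnt n a j s r, int n - 1) (cnt n (a - 1) j s r, int n)"
proof -
  define t1 where "t1 = (\<lambda>i. if int n - 1 - int (n - a) < i \<and> i \<le> int n - 1 then SB else cnt n a j s r i)"
  have 1: "(stp ^^ (n - a)) (cnt n a j s r, int n - 1) = (t1, int n - 1 - int (n - a))"
    unfolding t1_def using assms by (intro sweep_left) (auto simp: cnt_def)
  have e1: "int n - 1 - int (n - a) = int a - 1" using assms by simp
  have 2: "stp (t1, int a - 1) = (t1(int a - 1 := SC), int a)"
    using assms by (simp add: tm_step_def t1_def cnt_def)
  define t2 where "t2 = t1(int a - 1 := SC)"
  have 3: "(stp ^^ (n - a)) (t2, int a) = ((\<lambda>i. if int a \<le> i \<and> i < int a + int (n - a) then SC else t2 i), int a + int (n - a))"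
    unfolding t2_def t1_def using assms by (intro sweep_right) (auto simp: cnt_def)
  have e3: "(\<lambda>i. if int a \<le> i \<and> i < int a + int (n - a) then SC else t2 i) = cnt n (a - 1) j s r"
    unfolding t2_def t1_def cnt_def using assms by (rule_tac ext) auto
  have e4: "int a + int (n - a) = int n" using assms by simp
  show ?thesis
    using 1 2 3 e1 e3 e4 unfolding reach_def t2_def
    by (metis (no_types, lifting) funpow_add funpow_Suc_right comp_apply)
qed

lemma nofuel:
  shows "\<not> hlt (cnt n 0 j s r, int n - 1)"
proof -
  define t1 where "t1 = (\<lambda>i. if int n - 1 - int n < i \<and> i \<le> int n - 1 then SB else cnt n 0 j s r i)"
  have 1: "(stp ^^ n) (cnt n 0 j s r, int n - 1) = (t1, int n - 1 - int n)"
    unfolding t1_def by (intro sweep_left) (auto simp: cnt_def)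
  have "\<not> hlt (t1, int n - 1 - int n)"
    by (rule blank_nohlt) (auto simp: t1_def cnt_def)
  then show ?thesis using 1 reach_hlt unfolding reach_def by metis
qed

lemma step_R: "t p = x \<Longrightarrow> delta_cc x = Some (y, R) \<Longrightarrow> stp (t, p) = (t(p := y), p + 1)"
  by (simp add: tm_step_def)

lemma reach_one: "reach c (stp c)"
  unfolding reach_def by (rule exI[of _ 1]) simp

lemma cnt_upd: "A \<le> n \<Longrightarrow> (cnt n A j SZ (r(int n + int j := S1)))(int n + int j := SZ) = cnt n A (Suc j) SZ r"
  unfolding cnt_def by (rule ext) auto

lemma pass:
  "a \<le> n \<Longrightarrow> (2^j - 1 \<le> a \<longrightarrow> reach (cnt n a j S0 r, int n) (cnt n (a - (2^j - 1)) j SZ r, int n + int j))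
     \<and> (a < 2^j - 1 \<longrightarrow> \<not> hlt (cnt n a j S0 r, int n))"
proof (induction j arbitrary: a r)
  case 0
  have "cnt n a 0 S0 r = cnt n a 0 SZ r" by (rule ext) (simp add: cnt_def)
  then show ?case using reach_refl by simp
next
  case (Suc j)
  define P :: nat where "P = 2^j"
  have P1: "P \<ge> 1" unfolding P_def by simp
  have P2: "(2::nat)^(Suc j) = 2 * P" unfolding P_def by simp
  define r' where "r' = r(int n + int j := S0)"
  define r'' where "r'' = r(int n + int j := S1)"
  have E0: "cnt n a (Suc j) S0 r = cnt n a j S0 r'"
    unfolding r'_def cnt_def by (rule ext) auto
  show ?case
  proof (cases "a < P - 1")
    case True
    then have "\<not> hlt (cnt n a j S0 r', int n)" using Suc.IH[of a r'] Suc.prems P_def by auto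
    then show ?thesis using True E0 P2 by auto
  next
    case False
    define a' where "a' = a - (P - 1)"
    have a'n: "a' \<le> n" using Suc.prems unfolding a'_def by simp
    have R1: "reach (cnt n a (Suc j) S0 r, int n) (cnt n a' j SZ r', int n + int j)"
      using Suc.IH[of a r'] Suc.prems False E0 unfolding a'_def P_def by auto
    have S2: "stp (cnt n a' j SZ r', int n + int j) = (cnt n a' j SZ r'', int n + int j - 1)"
    proof -
      have "cnt n a' j SZ r' (int n + int j) = S0" using a'n unfolding cnt_def r'_def by simp
      moreover have "(cnt n a' j SZ r')(int n + int j := S1) = cnt n a' j SZ r''"
        using a'n unfolding cnt_def r'_def r''_def by (rule_tac ext) auto
      ultimately show ?thesis by (simp add: tm_step_def)
    qed
    have S3: "(stp ^^ j) (cnt n a' j SZ r'', int n + int j - 1) = (cnt n a' j S0 r'', int n - 1)"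
    proof -
      have "(stp ^^ j) (cnt n a' j SZ r'', int n + int j - 1) =
        ((\<lambda>i. if int n + int j - 1 - int j < i \<and> i \<le> int n + int j - 1 then S0 else cnt n a' j SZ r'' i),
          int n + int j - 1 - int j)"
        using a'n by (intro sweep_left) (auto simp: cnt_def)
      moreover have "(\<lambda>i. if int n + int j - 1 - int j < i \<and> i \<le> int n + int j - 1 then S0 else cnt n a' j SZ r'' i)
         = cnt n a' j S0 r''" using a'n unfolding cnt_def by (rule_tac ext) auto
      ultimately show ?thesis by simp
    qed
    have R3: "reach (cnt n a (Suc j) S0 r, int n) (cnt n a' j S0 r'', int n - 1)"
      using R1 S2 S3 reach_trans reach_step unfolding reach_def by metis
    show ?thesis
    proof (cases "a' = 0")
      case True
      then have "\<not> hlt (cnt n a (Suc j) S0 r, int n)" using R3 nofuel reach_hlt by metis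
      moreover have "a < 2^(Suc j) - 1" using True False P2 P1 unfolding a'_def by simp
      ultimately show ?thesis by simp
    next
      case False2: False
      have R4: "reach (cnt n a (Suc j) S0 r, int n) (cnt n (a' - 1) j S0 r'', int n)"
        using R3 fuel[OF a'n] False2 reach_trans by simp
      show ?thesis
      proof (cases "a' - 1 < P - 1")
        case True
        then have "\<not> hlt (cnt n (a' - 1) j S0 r'', int n)"
          using Suc.IH[of "a' - 1" r''] a'n P_def by auto
        then have "\<not> hlt (cnt n a (Suc j) S0 r, int n)" using R4 reach_hlt by metis
        moreover have "a < 2^(Suc j) - 1" using True False P2 P1 unfolding a'_def by simp
        ultimately show ?thesis by simp
      next
        case False3: False
        have R5: "reach (cnt n a (Suc j) S0 r, int n) (cnt n (a' - 1 - (P - 1)) j SZ r'', int n + int j)"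
          using Suc.IH[of "a' - 1" r''] a'n P_def False3 R4 reach_trans by auto
        have S6: "stp (cnt n (a' - 1 - (P - 1)) j SZ r'', int n + int j)
          = (cnt n (a - (2^(Suc j) - 1)) (Suc j) SZ r, int n + int (Suc j))"
        proof -
          have "cnt n (a' - 1 - (P - 1)) j SZ r'' (int n + int j) = S1" using a'n unfolding cnt_def r''_def by simp
          moreover have "(cnt n (a' - 1 - (P - 1)) j SZ r'')(int n + int j := SZ) = cnt n (a - (2^(Suc j) - 1)) (Suc j) SZ r"
          proof -
            have eqa: "a - (2^(Suc j) - 1) = a' - 1 - (P - 1)" using P1 P2 False False3 unfolding a'_def by simp
            have le: "a' - 1 - (P - 1) \<le> n" using a'n by simp
            show ?thesis unfolding eqa r''_def by (rule cnt_upd[OF le])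
          qed
          ultimately show ?thesis by (metis step_R delta_cc.simps(4) add.commute of_nat_Suc add.left_commute)
        qed
        have "reach (cnt n a (Suc j) S0 r, int n) (cnt n (a - (2^(Suc j) - 1)) (Suc j) SZ r, int n + int (Suc j))"
          using reach_trans[OF R5 reach_trans[OF reach_one reach_refl]] S6 by simp
        moreover have "\<not> a < 2^(Suc j) - 1" using False3 False False2 P2 P1 unfolding a'_def by simp
        ultimately show ?thesis by simp
      qed
    qed
  qed
qed

lemma iw_nth: "k < n + m + 1 \<Longrightarrow> input_word n m ! k = (if k < n then Su else if k < n + m then S0 else Sh)"
  unfolding input_word_def by (auto simp: nth_append)

lemma init_eq: "fst (init_config Blank (input_word n m)) =
  (\<lambda>i. if i < 0 then Blank else if i < int n then Su else if i < int n + int m then S0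
     else if i = int n + int m then Sh else Blank)"
proof (rule ext)
  fix i :: int
  show "fst (init_config Blank (input_word n m)) i = (if i < 0 then Blank else if i < int n then Su else if i < int n + int m then S0
     else if i = int n + int m then Sh else Blank)"
  proof (cases "0 \<le> i \<and> i < int n + int m + 1")
    case True
    then have "nat i < n + m + 1" by linarith
    then show ?thesis using True iw_nth[of "nat i" n m]
      by (auto simp: init_config_def input_word_def)
  next
    case False
    then show ?thesis by (auto simp: init_config_def input_word_def)
  qed
qed

theorem theorem2:
  fixes n m :: nat
  shows "M_cc_halts (input_word n m) \<longleftrightarrow> n \<ge> 2 ^ m - 1"
proof -
  define T0 where "T0 = fst (init_config Blank (input_word n m))"
  have ic: "init_config Blank (input_word n m) = (T0, 0)" unfolding T0_def by (simp add: init_config_def)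
  have mh: "M_cc_halts (input_word n m) = hlt (T0, 0)"
    unfolding M_cc_halts_def tm_halts_def hlt_def H_cc_def ic by simp
  define r where "r = (\<lambda>i::int. if i = int n + int m then Sh else Blank)"
  have sw: "(stp ^^ n) (T0, 0) = ((\<lambda>i. if 0 \<le> i \<and> i < 0 + int n then SU else T0 i), 0 + int n)"
    by (rule sweep_right) (auto simp: T0_def init_eq)
  have ce: "(\<lambda>i. if 0 \<le> i \<and> i < 0 + int n then SU else T0 i) = cnt n n m S0 r"
    unfolding T0_def init_eq cnt_def r_def by (rule ext) auto
  have "reach (T0, 0) (cnt n n m S0 r, int n)" unfolding reach_def using sw ce by auto
  then have h1: "hlt (T0, 0) = hlt (cnt n n m S0 r, int n)" by (rule reach_hlt)
  have P: "(2^m - 1 \<le> n \<longrightarrow> reach (cnt n n m S0 r, int n) (cnt n (n - (2^m - 1)) m SZ r, int n + int m))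
     \<and> (n < 2^m - 1 \<longrightarrow> \<not> hlt (cnt n n m S0 r, int n))" by (rule pass) simp
  show ?thesis
  proof (cases "2^m - 1 \<le> n")
    case True
    have "hlt (cnt n (n - (2^m - 1)) m SZ r, int n + int m)"
    proof -
      have "n - (2^m - 1) \<le> n" by (rule diff_le_self)
      then have "int (n - (2^m - 1)) \<le> int n + int m" by linarith
      then show ?thesis unfolding hlt_def by (intro exI[of _ 0]) (simp add: cnt_def r_def)
    qed
    then show ?thesis using P True reach_hlt mh h1 by metis
  next
    case False
    then show ?thesis using P mh h1 by simp
  qed
qed

end
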